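(* Let $n,m,k\ge 1$, let $S$ be a Boolean $n\times m$ matrix, and put $\bar n=n+2$, $\bar m=m+2$, $\bar k=k+2$. Let $\bar S$ be the Boolean $\bar n\times\bar m$ matrix whose first row is all ones, whose first column is all ones, whose entries $\bar s_{ij}$ with $i\ge 2$, $j=2$ or with $i=2$, $j\ge 2$ are $0$, and whose lower-right $n\times m$ block is $S$, i.e. $\bar s_{ij}=s_{i-2,j-2}$ for $i,j\ge 3$. Suppose there exist a Boolean $\bar n\times\bar k$ matrix $\bar E$ and a Boolean $\bar k\times\bar m$ matrix $\bar P$ with $\bar S=\bar E\cdot\bar P$. Then there also exist Boolean matrices $\bar E$ ($\bar n\times\bar k$) and $\bar P$ ($\bar k\times\bar m$) with $\bar S=\bar E\cdot\bar P$ which additionally satisfy: (i) the first row of $\bar E$ is all ones; (ii) the second row of $\bar E$ is $(1,0,\dots,0)$; (iii) $\bar e_{i2}=0$ for all $i\ge 3$; (iv) the first row of $\bar P$ is $(1,0,\dots,0)$; (v) the first column of $\bar P$ is all ones; (vi) $\bar p_{22}=1$.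
   Context: All matrices are over the Boolean algebra $(\{0,1\},\vee,\wedge)$. The Boolean matrix product of an $n\times k$ matrix $E=(e_{ia})$ and a $k\times m$ matrix $P=(p_{aj})$ is the $n\times m$ matrix $E\cdot P$ with entries $(E\cdot P)_{ij}=\bigvee_{a=1}^{k}(e_{ia}\wedge p_{aj})$. *)

theory Defs
  imports Main
begin

text \<open>Boolean matrices are functions nat => nat => bool, indexed 1-based;
only entries with indices within the stated dimensions are meaningful.\<close>

definition bool_mult :: "nat \<Rightarrow> (nat \<Rightarrow> nat \<Rightarrow> bool) \<Rightarrow> (nat \<Rightarrow> nat \<Rightarrow> bool) \<Rightarrow> nat \<Rightarrow> nat \<Rightarrow> bool" where
  "bool_mult k E P i j = (\<exists>a\<in>{1..k}. E i a \<and> P a j)"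

definition mat_eq :: "nat \<Rightarrow> nat \<Rightarrow> (nat \<Rightarrow> nat \<Rightarrow> bool) \<Rightarrow> (nat \<Rightarrow> nat \<Rightarrow> bool) \<Rightarrow> bool" where
  "mat_eq n m A B = (\<forall>i\<in>{1..n}. \<forall>j\<in>{1..m}. A i j = B i j)"

definition bar :: "(nat \<Rightarrow> nat \<Rightarrow> bool) \<Rightarrow> nat \<Rightarrow> nat \<Rightarrow> bool" where
  "bar S i j = (if i = 1 \<or> j = 1 then True
               else if i = 2 \<or> j = 2 then False
               else S (i - 2) (j - 2))"

end

theory Submission
  imports Defs
begin

theorem lemma1:
  fixes n m k :: nat and S :: "nat \<Rightarrow> nat \<Rightarrow> bool"
  assumes "n \<ge> 1" "m \<ge> 1" "k \<ge> 1"
    and "\<exists>E P. mat_eq (n+2) (m+2) (bar S) (bool_mult (k+2) E P)"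
  shows "\<exists>E P. mat_eq (n+2) (m+2) (bar S) (bool_mult (k+2) E P)
     \<and> (\<forall>a\<in>{1..k+2}. E 1 a)
     \<and> E 2 1 \<and> (\<forall>a\<in>{2..k+2}. \<not> E 2 a)
     \<and> (\<forall>i\<in>{3..n+2}. \<not> E i 2)
     \<and> P 1 1 \<and> (\<forall>j\<in>{2..m+2}. \<not> P 1 j)
     \<and> (\<forall>a\<in>{1..k+2}. P a 1)
     \<and> P 2 2"
proof -
  obtain E P where EP: "mat_eq (n+2) (m+2) (bar S) (bool_mult (k+2) E P)"
    using assms(4) by blast
  have eq: "\<And>i j. i \<in> {1..n+2} \<Longrightarrow> j \<in> {1..m+2} \<Longrightarrow> bar S i j = (\<exists>a\<in>{1..k+2}. E i a \<and> P a j)"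
    using EP unfolding mat_eq_def bool_mult_def by blast
  have "bar S 2 1" by (simp add: bar_def)
  then obtain a0 where a0: "a0 \<in> {1..k+2}" "E 2 a0" "P a0 1" using eq[of 2 1] by auto
  have "bar S 1 2" by (simp add: bar_def)
  then obtain a1 where a1: "a1 \<in> {1..k+2}" "E 1 a1" "P a1 2" using eq[of 1 2] by auto
  have P0: "\<not> P a0 j" if "j \<in> {2..m+2}" for j
  proof -
    have "\<not> bar S 2 j" using that by (simp add: bar_def)
    then show ?thesis using eq[of 2 j] that a0 by auto
  qed
  have E1: "\<not> E i a1" if "i \<in> {3..n+2}" for i
  proof -
    have "\<not> bar S i 2" using that by (simp add: bar_def)
    then show ?thesis using eq[of i 2] that a1 by auto
  qed
  have ne: "a0 \<noteq> a1" using P0[of 2] a1 by auto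
  have "card ({1..k+2} - {a0,a1}) = k" using a0 a1 ne by (simp add: card_Diff_subset)
  moreover have "card {3..k+2} = k" by simp
  ultimately obtain g where g: "bij_betw g {3..k+2} ({1..k+2} - {a0,a1})"
    by (metis finite_same_card_bij finite_Diff finite_atLeastAtMost)
  define E' where "E' i a = (i = 1 \<or> a = 1 \<or> (i \<ge> 3 \<and> a \<ge> 3 \<and> E i (g a)))" for i a
  define P' where "P' a j = (j = 1 \<or> (a = 2 \<and> j \<ge> 2) \<or> (a \<ge> 3 \<and> j \<ge> 3 \<and> P (g a) j))" for a j
  have inner: "(\<exists>a\<in>{1..k+2}. E i a \<and> P a j) = (\<exists>b\<in>{3..k+2}. E i (g b) \<and> P (g b) j)"
    if "i \<in> {3..n+2}" "j \<in> {3..m+2}" for i j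
  proof
    assume "\<exists>a\<in>{1..k+2}. E i a \<and> P a j"
    then obtain a where a: "a \<in> {1..k+2}" "E i a" "P a j" by blast
    have "a \<noteq> a0" using P0[of j] a that by auto
    moreover have "a \<noteq> a1" using E1[of i] a that by auto
    ultimately have "a \<in> g ` {3..k+2}" using g a(1) unfolding bij_betw_def by auto
    then show "\<exists>b\<in>{3..k+2}. E i (g b) \<and> P (g b) j" using a by auto
  next
    assume "\<exists>b\<in>{3..k+2}. E i (g b) \<and> P (g b) j"
    then obtain b where "b \<in> {3..k+2}" "E i (g b)" "P (g b) j" by blast
    moreover have "g b \<in> {1..k+2}" using g \<open>b \<in> {3..k+2}\<close> unfolding bij_betw_def by blast
    ultimately show "\<exists>a\<in>{1..k+2}. E i a \<and> P a j" by blast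
  qed
  have "mat_eq (n+2) (m+2) (bar S) (bool_mult (k+2) E' P')"
    unfolding mat_eq_def bool_mult_def
  proof (intro ballI)
    fix i j assume i: "i \<in> {1..n+2}" and j: "j \<in> {1..m+2}"
    show "bar S i j = (\<exists>a\<in>{1..k+2}. E' i a \<and> P' a j)"
    proof (cases "i = 1 \<or> j = 1")
      case True
      then show ?thesis
      proof
        assume "i = 1"
        then show ?thesis
          using j by (cases "j = 1") (auto simp: bar_def E'_def P'_def intro!: bexI[of _ 1] bexI[of _ 2])
      next
        assume "j = 1"
        then show ?thesis by (auto simp: bar_def E'_def P'_def intro!: bexI[of _ 1])
      qed
    next
      case False
      then have i2: "i \<ge> 2" and j2: "j \<ge> 2" using i j by auto
      show ?thesis
      proof (cases "i = 2 \<or> j = 2")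
        case True
        then show ?thesis using False i2 j2 by (auto simp: bar_def E'_def P'_def)
      next
        case False2: False
        then have i3: "i \<in> {3..n+2}" and j3: "j \<in> {3..m+2}" using i j i2 j2 by auto
        have "bar S i j = (\<exists>a\<in>{1..k+2}. E i a \<and> P a j)" using eq i j by blast
        also have "\<dots> = (\<exists>b\<in>{3..k+2}. E i (g b) \<and> P (g b) j)" using inner i3 j3 by blast
        also have "\<dots> = (\<exists>a\<in>{1..k+2}. E' i a \<and> P' a j)"
        proof
          assume "\<exists>b\<in>{3..k+2}. E i (g b) \<and> P (g b) j"
          then obtain b where "b \<in> {3..k+2}" "E i (g b)" "P (g b) j" by blast
          then show "\<exists>a\<in>{1..k+2}. E' i a \<and> P' a j" using i3 j3
            by (auto simp: E'_def P'_def intro!: bexI[of _ b])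
        next
          assume "\<exists>a\<in>{1..k+2}. E' i a \<and> P' a j"
          then obtain a where a: "a \<in> {1..k+2}" "E' i a" "P' a j" by blast
          then have "a \<ge> 3" using i3 j3 by (auto simp: E'_def P'_def)
          then show "\<exists>b\<in>{3..k+2}. E i (g b) \<and> P (g b) j" using a i3 j3
            by (auto simp: E'_def P'_def)
        qed
        finally show ?thesis .
      qed
    qed
  qed
  moreover have "(\<forall>a\<in>{1..k+2}. E' 1 a) \<and> E' 2 1 \<and> (\<forall>a\<in>{2..k+2}. \<not> E' 2 a)
     \<and> (\<forall>i\<in>{3..n+2}. \<not> E' i 2)
     \<and> P' 1 1 \<and> (\<forall>j\<in>{2..m+2}. \<not> P' 1 j)
     \<and> (\<forall>a\<in>{1..k+2}. P' a 1) \<and> P' 2 2"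
    by (auto simp: E'_def P'_def)
  ultimately show ?thesis by blast
qed

end
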